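(* $16\rightarrow 167\rightrightarrows 19$: there is an injective isotone map $\varphi:\mathbf 2^4\to F_4^-$ such that $\{\varphi(x)[p_1:=e]: x\in\mathbf 2^4,\ e\in\{0,1\}\}\supseteq F_3^-$.
   Context: $F_k$ is the set of monotone Boolean functions of $k$ variables $p_1,\dots,p_k$ (including constants $0,1$), ordered pointwise; $F_k^-=F_k\setminus\{0\}$. For $g\in F_k$ and $e\in\{0,1\}$, $g[p_1:=e]$ is the function of $p_2,\dots,p_k$ (identified with $F_{k-1}$) obtained by substituting $e$ for $p_1$. $\mathbf 2^i$ is $\{0,1\}^i$ with the coordinatewise order; isotone means order-preserving. Notation: $2^i\rightarrow|F_j^-|\rightrightarrows|F_{j-1}^-|$ means there is an injective isotone map $\varphi:\mathbf 2^i\to F_j^-$ such that every element of $F_{j-1}^-$ equals $\varphi(x)[p_1:=e]$ for some $x\in\mathbf 2^i$, $e\in\{0,1\}$. Here $|F_3^-|=19$, $|F_4^-|=167$. *)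

theory Defs
  imports Main
begin

text \<open>Assignments to the variables p_1,...,p_k are Boolean lists of length k
  (the head is the value of p_1). The cube 2^i is the set of Boolean lists of
  length i ordered coordinatewise.\<close>

definition cube :: "nat \<Rightarrow> bool list set" where
  "cube i = {xs. length xs = i}"

definition cube_le :: "bool list \<Rightarrow> bool list \<Rightarrow> bool" where
  "cube_le xs ys = list_all2 (\<le>) xs ys"

text \<open>A Boolean function of k variables is a function on bool lists that is
  False outside length k (normal form, so that equality is extensional
  equality on length-k assignments and the order is the pointwise order).\<close>

definition monotone_bool_fun :: "nat \<Rightarrow> (bool list \<Rightarrow> bool) \<Rightarrow> bool" where
  "monotone_bool_fun k f \<longleftrightarrow>
     (\<forall>xs. length xs \<noteq> k \<longrightarrow> \<not> f xs) \<and>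
     (\<forall>xs ys. length xs = k \<longrightarrow> length ys = k \<longrightarrow> cube_le xs ys \<longrightarrow> f xs \<longrightarrow> f ys)"

definition F :: "nat \<Rightarrow> (bool list \<Rightarrow> bool) set" where
  "F k = {f. monotone_bool_fun k f}"

definition Fminus :: "nat \<Rightarrow> (bool list \<Rightarrow> bool) set" where
  "Fminus k = F k - {(\<lambda>_. False)}"

definition subst1 :: "(bool list \<Rightarrow> bool) \<Rightarrow> bool \<Rightarrow> (bool list \<Rightarrow> bool)" where
  "subst1 g e = (\<lambda>xs. g (e # xs))"

end

theory Submission
  imports Defs
begin

definition cnt :: "bool \<Rightarrow> bool \<Rightarrow> bool \<Rightarrow> bool \<Rightarrow> nat" where
  "cnt i j k l = of_bool i + of_bool j + of_bool k + of_bool l"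

definition Bf :: "bool \<Rightarrow> bool \<Rightarrow> bool \<Rightarrow> bool \<Rightarrow> bool \<Rightarrow> bool \<Rightarrow> bool \<Rightarrow> bool" where
  "Bf i j k l q r s = (let n = cnt i j k l; m = (q \<and> r \<or> q \<and> s \<or> r \<and> s) in
     if n = 0 then q \<and> r \<and> s else if n = 4 then True else if n = 3 then q \<or> r \<or> s
     else (i \<and> q) \<or> (j \<and> r) \<or> (k \<and> s) \<or> (l \<and> m))"

definition Af :: "bool \<Rightarrow> bool \<Rightarrow> bool \<Rightarrow> bool \<Rightarrow> bool \<Rightarrow> bool \<Rightarrow> bool \<Rightarrow> bool" where
  "Af i j k l q r s = (let n = cnt i j k l; m = (q \<and> r \<or> q \<and> s \<or> r \<and> s) in
     if n = 0 then False else if n = 1 then q \<and> r \<and> s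
     else if n = 2 then (\<not> i \<or> q) \<and> (\<not> j \<or> r) \<and> (\<not> k \<or> s) \<and> (\<not> l \<or> m)
     else if n = 3 then (if \<not> l then m else if \<not> i then q \<or> r \<and> s else if \<not> j then r \<or> q \<and> s else s \<or> q \<and> r)
     else q \<or> r \<or> s)"

definition G :: "bool list \<Rightarrow> bool \<Rightarrow> bool \<Rightarrow> bool \<Rightarrow> bool \<Rightarrow> bool" where
  "G xs e q r s = (case xs of [i,j,k,l] \<Rightarrow> if e then Bf i j k l q r s else Af i j k l q r s | _ \<Rightarrow> False)"

definition phi :: "bool list \<Rightarrow> bool list \<Rightarrow> bool" where
  "phi xs = (\<lambda>ys. length ys = 4 \<and> G xs (ys!0) (ys!1) (ys!2) (ys!3))"

lemma len4: "length ys = 4 \<longleftrightarrow> (\<exists>a b c d. ys = [a,b,c,d])"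
  by (auto simp: numeral_eq_Suc length_Suc_conv)

lemma len3: "length ys = 3 \<longleftrightarrow> (\<exists>a b c. ys = [a,b,c])"
  by (auto simp: numeral_eq_Suc length_Suc_conv)

lemma bmono: "(P False \<Longrightarrow> P True) \<Longrightarrow> (a::bool) \<le> b \<Longrightarrow> P a \<Longrightarrow> P b"
  by (cases a; cases b) auto

lemma Af_i: "Af False j k l q r s \<Longrightarrow> Af True j k l q r s"
  by (cases j; cases k; cases l; cases q; cases r; cases s) (simp_all add: Af_def cnt_def)

lemma Af_j: "Af i False k l q r s \<Longrightarrow> Af i True k l q r s"
  by (cases i; cases k; cases l; cases q; cases r; cases s) (simp_all add: Af_def cnt_def)

lemma Af_k: "Af i j False l q r s \<Longrightarrow> Af i j True l q r s"
  by (cases i; cases j; cases l; cases q; cases r; cases s) (simp_all add: Af_def cnt_def)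

lemma Af_l: "Af i j k False q r s \<Longrightarrow> Af i j k True q r s"
  by (cases i; cases j; cases k; cases q; cases r; cases s) (simp_all add: Af_def cnt_def)

lemma Af_q: "Af i j k l False r s \<Longrightarrow> Af i j k l True r s"
  by (cases i; cases j; cases k; cases l; cases r; cases s) (simp_all add: Af_def cnt_def)

lemma Af_r: "Af i j k l q False s \<Longrightarrow> Af i j k l q True s"
  by (cases i; cases j; cases k; cases l; cases q; cases s) (simp_all add: Af_def cnt_def)

lemma Af_s: "Af i j k l q r False \<Longrightarrow> Af i j k l q r True"
  by (cases i; cases j; cases k; cases l; cases q; cases r) (simp_all add: Af_def cnt_def)

lemma Bf_i: "Bf False j k l q r s \<Longrightarrow> Bf True j k l q r s"
  by (cases j; cases k; cases l; cases q; cases r; cases s) (simp_all add: Bf_def cnt_def)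

lemma Bf_j: "Bf i False k l q r s \<Longrightarrow> Bf i True k l q r s"
  by (cases i; cases k; cases l; cases q; cases r; cases s) (simp_all add: Bf_def cnt_def)

lemma Bf_k: "Bf i j False l q r s \<Longrightarrow> Bf i j True l q r s"
  by (cases i; cases j; cases l; cases q; cases r; cases s) (simp_all add: Bf_def cnt_def)

lemma Bf_l: "Bf i j k False q r s \<Longrightarrow> Bf i j k True q r s"
  by (cases i; cases j; cases k; cases q; cases r; cases s) (simp_all add: Bf_def cnt_def)

lemma Bf_q: "Bf i j k l False r s \<Longrightarrow> Bf i j k l True r s"
  by (cases i; cases j; cases k; cases l; cases r; cases s) (simp_all add: Bf_def cnt_def)

lemma Bf_r: "Bf i j k l q False s \<Longrightarrow> Bf i j k l q True s"
  by (cases i; cases j; cases k; cases l; cases q; cases s) (simp_all add: Bf_def cnt_def)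

lemma Bf_s: "Bf i j k l q r False \<Longrightarrow> Bf i j k l q r True"
  by (cases i; cases j; cases k; cases l; cases q; cases r) (simp_all add: Bf_def cnt_def)

lemma Af_i': "i \<le> i' \<Longrightarrow> Af i j k l q r s \<Longrightarrow> Af i' j k l q r s"
  using Af_i[of j k l q r s] by (cases i; cases "i'") auto

lemma Af_j': "j \<le> j' \<Longrightarrow> Af i j k l q r s \<Longrightarrow> Af i j' k l q r s"
  using Af_j[of i k l q r s] by (cases j; cases "j'") auto

lemma Af_k': "k \<le> k' \<Longrightarrow> Af i j k l q r s \<Longrightarrow> Af i j k' l q r s"
  using Af_k[of i j l q r s] by (cases k; cases "k'") auto

lemma Af_l': "l \<le> l' \<Longrightarrow> Af i j k l q r s \<Longrightarrow> Af i j k l' q r s"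
  using Af_l[of i j k q r s] by (cases l; cases "l'") auto

lemma Af_q': "q \<le> q' \<Longrightarrow> Af i j k l q r s \<Longrightarrow> Af i j k l q' r s"
  using Af_q[of i j k l r s] by (cases q; cases "q'") auto

lemma Af_r': "r \<le> r' \<Longrightarrow> Af i j k l q r s \<Longrightarrow> Af i j k l q r' s"
  using Af_r[of i j k l q s] by (cases r; cases "r'") auto

lemma Af_s': "s \<le> s' \<Longrightarrow> Af i j k l q r s \<Longrightarrow> Af i j k l q r s'"
  using Af_s[of i j k l q r] by (cases s; cases "s'") auto

lemma Bf_i': "i \<le> i' \<Longrightarrow> Bf i j k l q r s \<Longrightarrow> Bf i' j k l q r s"
  using Bf_i[of j k l q r s] by (cases i; cases "i'") auto

lemma Bf_j': "j \<le> j' \<Longrightarrow> Bf i j k l q r s \<Longrightarrow> Bf i j' k l q r s"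
  using Bf_j[of i k l q r s] by (cases j; cases "j'") auto

lemma Bf_k': "k \<le> k' \<Longrightarrow> Bf i j k l q r s \<Longrightarrow> Bf i j k' l q r s"
  using Bf_k[of i j l q r s] by (cases k; cases "k'") auto

lemma Bf_l': "l \<le> l' \<Longrightarrow> Bf i j k l q r s \<Longrightarrow> Bf i j k l' q r s"
  using Bf_l[of i j k q r s] by (cases l; cases "l'") auto

lemma Bf_q': "q \<le> q' \<Longrightarrow> Bf i j k l q r s \<Longrightarrow> Bf i j k l q' r s"
  using Bf_q[of i j k l r s] by (cases q; cases "q'") auto

lemma Bf_r': "r \<le> r' \<Longrightarrow> Bf i j k l q r s \<Longrightarrow> Bf i j k l q r' s"
  using Bf_r[of i j k l q s] by (cases r; cases "r'") auto

lemma Bf_s': "s \<le> s' \<Longrightarrow> Bf i j k l q r s \<Longrightarrow> Bf i j k l q r s'"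
  using Bf_s[of i j k l q r] by (cases s; cases "s'") auto

lemma AB: "Af i j k l q r s \<Longrightarrow> Bf i j k l q r s"
  by (cases i; cases j; cases k; cases l; cases q; cases r; cases s) (simp_all add: Af_def Bf_def cnt_def)


lemma Af_mono:
  assumes le0: "i \<le> i'" and le1: "j \<le> j'" and le2: "k \<le> k'" and le3: "l \<le> l'"
    and le4: "q \<le> q'" and le5: "r \<le> r'" and le6: "s \<le> s'" and a: "Af i j k l q r s"
  shows "Af i' j' k' l' q' r' s'"
proof -
  from a have "Af i' j k l q r s" by (rule Af_i'[OF le0])
  then have "Af i' j' k l q r s" by (rule Af_j'[OF le1])
  then have "Af i' j' k' l q r s" by (rule Af_k'[OF le2])
  then have "Af i' j' k' l' q r s" by (rule Af_l'[OF le3])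
  then have "Af i' j' k' l' q' r s" by (rule Af_q'[OF le4])
  then have "Af i' j' k' l' q' r' s" by (rule Af_r'[OF le5])
  then have "Af i' j' k' l' q' r' s'" by (rule Af_s'[OF le6])
  then show ?thesis .
qed

lemma Bf_mono:
  assumes le0: "i \<le> i'" and le1: "j \<le> j'" and le2: "k \<le> k'" and le3: "l \<le> l'"
    and le4: "q \<le> q'" and le5: "r \<le> r'" and le6: "s \<le> s'" and a: "Bf i j k l q r s"
  shows "Bf i' j' k' l' q' r' s'"
proof -
  from a have "Bf i' j k l q r s" by (rule Bf_i'[OF le0])
  then have "Bf i' j' k l q r s" by (rule Bf_j'[OF le1])
  then have "Bf i' j' k' l q r s" by (rule Bf_k'[OF le2])
  then have "Bf i' j' k' l' q r s" by (rule Bf_l'[OF le3])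
  then have "Bf i' j' k' l' q' r s" by (rule Bf_q'[OF le4])
  then have "Bf i' j' k' l' q' r' s" by (rule Bf_r'[OF le5])
  then have "Bf i' j' k' l' q' r' s'" by (rule Bf_s'[OF le6])
  then show ?thesis .
qed

lemma G_mono:
  assumes le: "e \<le> e'" "q \<le> q'" "r \<le> r'" "s \<le> s'" and g: "G [i,j,k,l] e q r s"
  shows "G [i,j,k,l] e' q' r' s'"
proof (cases e)
  case True
  then have e': "e'" using le(1) by simp
  have "Bf i j k l q r s" using g True by (simp add: G_def)
  then have "Bf i j k l q' r' s'" by (rule Bf_mono[OF order_refl order_refl order_refl order_refl le(2,3,4)])
  then show ?thesis using e' by (simp add: G_def)
next
  case False
  have A: "Af i j k l q r s" using g False by (simp add: G_def)
  then have A': "Af i j k l q' r' s'" by (rule Af_mono[OF order_refl order_refl order_refl order_refl le(2,3,4)])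
  show ?thesis
  proof (cases e')
    case True
    then show ?thesis using AB[OF A'] by (simp add: G_def)
  next
    case False
    then show ?thesis using A' by (simp add: G_def)
  qed
qed

lemma G_iso:
  assumes le: "i \<le> i'" "j \<le> j'" "k \<le> k'" "l \<le> l'"
  shows "\<forall>e q r s. G [i,j,k,l] e q r s \<longrightarrow> G [i',j',k',l'] e q r s"
proof (intro allI impI)
  fix e q r s assume g: "G [i,j,k,l] e q r s"
  show "G [i',j',k',l'] e q r s"
  proof (cases e)
    case True
    have "Bf i j k l q r s" using g True by (simp add: G_def)
    then have "Bf i' j' k' l' q r s" by (rule Bf_mono[OF le order_refl order_refl order_refl])
    then show ?thesis using True by (simp add: G_def)
  next
    case False
    have "Af i j k l q r s" using g False by (simp add: G_def)
    then have "Af i' j' k' l' q r s" by (rule Af_mono[OF le order_refl order_refl order_refl])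
    then show ?thesis using False by (simp add: G_def)
  qed
qed

lemma G_inj:
  "\<forall>e q r s. G [i,j,k,l] e q r s = G [i',j',k',l'] e q r s \<Longrightarrow> [i,j,k,l] = [i',j',k',l']"
  by (cases i; cases j; cases k; cases l; cases i'; cases j'; cases k'; cases l')
     (simp_all add: G_def Af_def Bf_def cnt_def all_bool_eq)

lemma G_cover:
  fixes T :: "bool \<Rightarrow> bool \<Rightarrow> bool \<Rightarrow> bool"
  assumes mono: "\<And>q r s q' r' s'. q \<le> q' \<Longrightarrow> r \<le> r' \<Longrightarrow> s \<le> s' \<Longrightarrow> T q r s \<Longrightarrow> T q' r' s'"
    and nz: "T True True True"
  shows "\<exists>i j k l e. \<forall>q r s. G [i,j,k,l] e q r s = T q r s"
proof -
  have m1: "T False False False \<Longrightarrow> T x y z" for x y z using mono[where q=False and r=False and s=False and q'=x and r'=y and s'=z] by simp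
  have m2: "T True False False \<Longrightarrow> T True y z" for y z using mono[where q=True and r=False and s=False and q'=True and r'=y and s'=z] by simp
  have m3: "T False True False \<Longrightarrow> T x True z" for x z using mono[where q=False and r=True and s=False and q'=x and r'=True and s'=z] by simp
  have m4: "T False False True \<Longrightarrow> T x y True" for x y using mono[where q=False and r=False and s=True and q'=x and r'=y and s'=True] by simp
  have m5: "T True True False \<Longrightarrow> T True True z" for z using mono[where q=True and r=True and s=False and q'=True and r'=True and s'=z] by simp
  have m6: "T True False True \<Longrightarrow> T True y True" for y using mono[where q=True and r=False and s=True and q'=True and r'=y and s'=True] by simp
  have m7: "T False True True \<Longrightarrow> T x True True" for x using mono[where q=False and r=True and s=True and q'=x and r'=True and s'=True] by simp
  show ?thesis
    apply (simp only: ex_bool_eq all_bool_eq)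
    apply (cases "T False False False"; cases "T True False False"; cases "T False True False";
           cases "T False False True"; cases "T True True False"; cases "T True False True";
           cases "T False True True")
    apply (simp_all add: nz m1 m2 m3 m4 m5 m6 m7 G_def Af_def Bf_def cnt_def)
    done
qed

lemma G_top: "G [i,j,k,l] True True True True"
  by (cases i; cases j; cases k; cases l) (simp_all add: G_def Af_def Bf_def cnt_def)

lemma cube4: "x \<in> cube 4 \<longleftrightarrow> (\<exists>i j k l. x = [i,j,k,l])"
  by (simp add: cube_def len4)

lemma phi_F: assumes "x \<in> cube 4" shows "phi x \<in> Fminus 4"
proof -
  obtain i j k l where x: "x = [i,j,k,l]" using assms cube4 by blast
  have "monotone_bool_fun 4 (phi x)"
    unfolding monotone_bool_fun_def
  proof (intro conjI allI impI)
    fix xs :: "bool list" assume "length xs \<noteq> 4" then show "\<not> phi x xs" by (simp add: phi_def)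
  next
    fix xs ys :: "bool list" assume "length xs = 4" "length ys = 4" "cube_le xs ys" "phi x xs"
    then obtain a b c d a' b' c' d' where "xs = [a,b,c,d]" "ys = [a',b',c',d']"
      by (auto simp: len4)
    then show "phi x ys" using \<open>cube_le xs ys\<close> \<open>phi x xs\<close> G_mono[of a a' b b' c c' d d' i j k l]
      by (simp add: phi_def x cube_le_def)
  qed
  moreover have "phi x \<noteq> (\<lambda>_. False)"
  proof
    assume "phi x = (\<lambda>_. False)"
    then have "phi x [True,True,True,True] = False" by simp
    then show False using G_top by (simp add: phi_def x)
  qed
  ultimately show ?thesis by (simp add: Fminus_def F_def)
qed

lemma phi_iso: assumes "x \<in> cube 4" "y \<in> cube 4" "cube_le x y" shows "phi x \<le> phi y"
proof -
  obtain i j k l where x: "x = [i,j,k,l]" using assms cube4 by blast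
  obtain i' j' k' l' where y: "y = [i',j',k',l']" using assms cube4 by blast
  have "i \<le> i'" "j \<le> j'" "k \<le> k'" "l \<le> l'" using assms(3) by (simp_all add: x y cube_le_def)
  from G_iso[OF this] show ?thesis by (auto simp: le_fun_def phi_def x y)
qed

lemma phi_inj: "inj_on phi (cube 4)"
proof (rule inj_onI)
  fix x y assume "x \<in> cube 4" "y \<in> cube 4" "phi x = phi y"
  obtain i j k l where x: "x = [i,j,k,l]" using \<open>x \<in> cube 4\<close> cube4 by blast
  obtain i' j' k' l' where y: "y = [i',j',k',l']" using \<open>y \<in> cube 4\<close> cube4 by blast
  have "\<forall>e q r s. G [i,j,k,l] e q r s = G [i',j',k',l'] e q r s"
  proof (intro allI)
    fix e q r s
    have "phi x [e,q,r,s] = phi y [e,q,r,s]" using \<open>phi x = phi y\<close> by simp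
    then show "G [i,j,k,l] e q r s = G [i',j',k',l'] e q r s" by (simp add: phi_def x y)
  qed
  from G_inj[OF this] show "x = y" by (simp add: x y)
qed

lemma phi_cover: assumes "f \<in> Fminus 3" shows "\<exists>x e. f = subst1 (phi x) e \<and> x \<in> cube 4"
proof -
  have mf: "monotone_bool_fun 3 f" and nz: "f \<noteq> (\<lambda>_. False)" using assms by (auto simp: Fminus_def F_def)
  define T where "T q r s = f [q,r,s]" for q r s
  have mfa: "\<forall>xs ys. length xs = 3 \<longrightarrow> length ys = 3 \<longrightarrow> cube_le xs ys \<longrightarrow> f xs \<longrightarrow> f ys"
    using mf by (simp add: monotone_bool_fun_def)
  have mono: "T q' r' s'" if "q \<le> q'" "r \<le> r'" "s \<le> s'" "T q r s" for q r s q' r' s'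
  proof -
    have "cube_le [q,r,s] [q',r',s']" using that by (simp add: cube_le_def)
    then show ?thesis using mfa[rule_format, of "[q,r,s]" "[q',r',s']"] that(4) by (simp add: T_def)
  qed
  obtain ys where "f ys" using nz by auto
  then have "length ys = 3" using mf by (auto simp: monotone_bool_fun_def)
  then obtain a b c where "ys = [a,b,c]" by (auto simp: len3)
  then have "T a b c" using \<open>f ys\<close> by (simp add: T_def)
  then have tt: "T True True True" using mono[of a True b True c True] by simp
  have "\<exists>i j k l e. \<forall>q r s. G [i,j,k,l] e q r s = T q r s"
    using mono tt by (rule G_cover)
  then obtain i j k l e where G: "\<forall>q r s. G [i,j,k,l] e q r s = T q r s"
    by blast
  have "f = subst1 (phi [i,j,k,l]) e"
  proof
    fix zs show "f zs = subst1 (phi [i,j,k,l]) e zs"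
    proof (cases "length zs = 3")
      case True
      then obtain a b c where "zs = [a,b,c]" by (auto simp: len3)
      then show ?thesis using G by (simp add: subst1_def phi_def T_def)
    next
      case False
      then show ?thesis using mf by (auto simp: subst1_def phi_def monotone_bool_fun_def)
    qed
  qed
  then show ?thesis using cube4 by blast
qed

theorem mainTheorem6:
  shows "\<exists>\<phi> :: bool list \<Rightarrow> (bool list \<Rightarrow> bool).
           inj_on \<phi> (cube 4) \<and>
           \<phi> ` cube 4 \<subseteq> Fminus 4 \<and>
           (\<forall>x\<in>cube 4. \<forall>y\<in>cube 4. cube_le x y \<longrightarrow> \<phi> x \<le> \<phi> y) \<and>
           Fminus 3 \<subseteq> {subst1 (\<phi> x) e | x e. x \<in> cube 4}"
  apply (rule exI[of _ phi])
  using phi_inj phi_F phi_iso phi_cover by blast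

end
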